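(* Let $\alpha\in\mathbb{C}$ and let $S_n(x)\sim\left(\left(\frac{e^t-1}{t}\right)^{\alpha},\ \log(1+t)\right)$. Then for $n\ge1$, $$S_n(x)=\sum_{l=0}^{n-1}\binom{n-1}{l}N_l^{(-n)}\,B_{n-l}^{(\alpha)}(x).$$
   Context: For invertible $g(t)$ (nonzero constant term) and delta series $f(t)$ ($f(0)=0$, nonzero coefficient of $t$), the Sheffer sequence $S_n(x)\sim(g(t),f(t))$ is the unique polynomial sequence with $\sum_{k\ge0}S_k(y)\frac{t^k}{k!}=\frac{1}{g(\bar f(t))}e^{y\bar f(t)}$ for all $y\in\mathbb{C}$, where $\bar f$ is the compositional inverse of $f$. Complex powers of series with constant term $1$ are defined by $h^a=\exp(a\log h)$. The Narumi numbers are defined by $\left(\frac{\log(1+t)}{t}\right)^a=\sum_{l\ge0}N_l^{(a)}\frac{t^l}{l!}$. The Bernoulli polynomials of order $\alpha$ are defined by $\left(\frac{t}{e^t-1}\right)^{\alpha} e^{xt}=\sum_{n\ge0}B_n^{(\alpha)}(x)\frac{t^n}{n!}$. *)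

theory Defs
  imports "HOL-Computational_Algebra.Computational_Algebra"
begin

definition fps_log1 :: "complex fps \<Rightarrow> complex fps" where
  "fps_log1 h = fps_ln 1 oo (h - 1)"

definition fps_cpow :: "complex fps \<Rightarrow> complex \<Rightarrow> complex fps" where
  "fps_cpow h a = fps_exp 1 oo (fps_const a * fps_log1 h)"

text \<open>Sheffer sequence S ~ (g, f): g invertible, f a delta series, and for every y
  the exponential generating function of S_k(y) equals (1/g(fbar t)) e^(y fbar t),
  where fbar = fps_inv f is the compositional inverse of f.\<close>
definition sheffer :: "complex fps \<Rightarrow> complex fps \<Rightarrow> (nat \<Rightarrow> complex poly) \<Rightarrow> bool" where
  "sheffer g f S \<longleftrightarrow> g $ 0 \<noteq> 0 \<and> f $ 0 = 0 \<and> f $ 1 \<noteq> 0 \<and>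
     (\<forall>y::complex. Abs_fps (\<lambda>k. poly (S k) y / fact k)
        = inverse (g oo fps_inv f) * (fps_exp y oo fps_inv f))"

text \<open>Narumi numbers: (log(1+t)/t)^a = sum N_l^(a) t^l / l!.\<close>
definition narumi :: "complex \<Rightarrow> nat \<Rightarrow> complex" where
  "narumi a l = fact l * (fps_cpow (fps_shift 1 (fps_ln 1)) a) $ l"

text \<open>Bernoulli polynomials of order alpha: (t/(e^t-1))^alpha e^(xt) = sum B_n^(alpha)(x) t^n/n!.\<close>
definition bernoulli_ord :: "complex \<Rightarrow> nat \<Rightarrow> complex \<Rightarrow> complex" where
  "bernoulli_ord \<alpha> n x =
     fact n * (fps_cpow (inverse (fps_shift 1 (fps_exp 1 - 1))) \<alpha> * fps_exp x) $ n"

end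

theory Submission
  imports Defs
begin

lemma log1_0: "fps_log1 h $ 0 = 0"
  by (simp add: fps_log1_def)

lemma log1_deriv:
  assumes h0: "h $ 0 = 1"
  shows "fps_deriv (fps_log1 h) = fps_deriv h * inverse h"
proof -
  have c0: "(h - 1) $ 0 = 0" using h0 by simp
  have "fps_deriv (fps_log1 h) = (fps_deriv (fps_ln 1) oo (h - 1)) * fps_deriv (h - 1)"
    unfolding fps_log1_def by (rule fps_compose_deriv[OF c0])
  also have "fps_deriv (fps_ln (1::complex)) = inverse (1 + fps_X)"
    by (simp add: fps_ln_deriv)
  also have "inverse (1 + fps_X) oo (h - 1) = inverse ((1 + fps_X) oo (h - 1))"
    by (rule fps_inverse_compose[OF c0]) simp
  also have "(1 + fps_X) oo (h - 1) = h"
    using c0 by (simp add: fps_compose_add_distrib)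
  finally show ?thesis by (simp add: mult.commute)
qed

lemma cpow_0: "fps_cpow h a $ 0 = 1"
  by (simp add: fps_cpow_def)

lemma cpow_deriv:
  assumes h0: "h $ 0 = 1"
  shows "fps_deriv (fps_cpow h a) = fps_const a * fps_deriv h * inverse h * fps_cpow h a"
proof -
  have b0: "(fps_const a * fps_log1 h) $ 0 = 0" by (simp add: log1_0)
  show ?thesis
    unfolding fps_cpow_def fps_compose_deriv[OF b0]
    using log1_deriv[OF h0] by (simp add: mult_ac)
qed

lemma ode_unique:
  fixes E F D :: "complex fps"
  assumes "E $ 0 = F $ 0" "F $ 0 \<noteq> 0" "fps_deriv E = D * E" "fps_deriv F = D * F"
  shows "E = F"
proof -
  define W where "W = E * inverse F"
  have FI: "F * inverse F = 1" using assms(2) by (simp add: inverse_mult_eq_1')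
  have "fps_deriv W = D * E * inverse F + E * (- (D * F) * (inverse F)^2)"
    unfolding W_def using assms by (simp add: fps_inverse_deriv)
  also have "\<dots> = D * E * inverse F - D * E * inverse F * (F * inverse F)"
    by (simp add: power2_eq_square algebra_simps)
  also have "\<dots> = 0" using FI by simp
  finally have "W = fps_const (W $ 0)" by simp
  moreover have "W $ 0 = 1" unfolding W_def using assms by simp
  ultimately have "E * inverse F = 1" unfolding W_def by simp
  hence "E * inverse F * F = F" by simp
  thus ?thesis using FI by (simp add: mult_ac)
qed

lemma cpow_neg_nat:
  assumes h0: "h $ 0 = 1" and n: "n \<ge> 1"
  shows "fps_cpow h (- of_nat n) = inverse h ^ n"
proof (rule ode_unique[where D = "fps_const (- of_nat n) * fps_deriv h * inverse h"])
  show "fps_cpow h (- of_nat n) $ 0 = (inverse h ^ n) $ 0" using h0 by (simp add: cpow_0 fps_nth_power_0)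
  show "(inverse h ^ n) $ 0 \<noteq> 0" using h0 by (simp add: fps_nth_power_0)
  show "fps_deriv (fps_cpow h (- of_nat n)) = fps_const (- of_nat n) * fps_deriv h * inverse h * fps_cpow h (- of_nat n)"
    by (rule cpow_deriv[OF h0])
  have e: "(inverse h)\<^sup>2 * inverse h ^ (n - 1) = inverse h * inverse h ^ n"
    using n by (cases n) (auto simp: power2_eq_square)
  have "fps_deriv (inverse h ^ n) = fps_const (of_nat n) * (- fps_deriv h * (inverse h)\<^sup>2) * inverse h ^ (n - 1)"
    using h0 by (simp add: fps_deriv_power fps_inverse_deriv)
  also have "\<dots> = fps_const (- of_nat n) * fps_deriv h * ((inverse h)\<^sup>2 * inverse h ^ (n - 1))"
    by (simp add: fps_const_neg[symmetric] algebra_simps del: fps_const_neg)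
  also have "\<dots> = fps_const (- of_nat n) * fps_deriv h * inverse h * inverse h ^ n"
    by (subst e) (simp add: mult.assoc)
  finally show "fps_deriv (inverse h ^ n) = fps_const (- of_nat n) * fps_deriv h * inverse h * inverse h ^ n" .
qed

lemma inv_cpow:
  assumes h0: "h $ 0 = 1"
  shows "inverse (fps_cpow h a) = fps_cpow (inverse h) a"
proof (rule ode_unique[where D = "- fps_const a * fps_deriv h * inverse h"])
  have ih0: "inverse h $ 0 = 1" using h0 by simp
  have C0: "fps_cpow h a $ 0 \<noteq> 0" by (simp add: cpow_0)
  have CE: "fps_cpow h a * inverse (fps_cpow h a) = 1" using C0 by (simp add: inverse_mult_eq_1')
  have hI: "h * inverse h = 1" using h0 by (simp add: inverse_mult_eq_1')
  show "inverse (fps_cpow h a) $ 0 = fps_cpow (inverse h) a $ 0" by (simp add: cpow_0)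
  show "fps_cpow (inverse h) a $ 0 \<noteq> 0" by (simp add: cpow_0)
  have "fps_deriv (inverse (fps_cpow h a)) = - (fps_const a * fps_deriv h * inverse h * fps_cpow h a) * (inverse (fps_cpow h a))\<^sup>2"
    using C0 by (simp add: fps_inverse_deriv cpow_deriv[OF h0])
  also have "\<dots> = - fps_const a * fps_deriv h * inverse h * inverse (fps_cpow h a) * (fps_cpow h a * inverse (fps_cpow h a))"
    by (simp add: power2_eq_square algebra_simps fps_const_neg[symmetric] del: fps_const_neg)
  finally show "fps_deriv (inverse (fps_cpow h a)) = - fps_const a * fps_deriv h * inverse h * inverse (fps_cpow h a)"
    using CE by simp
  have "fps_deriv (fps_cpow (inverse h) a) = fps_const a * (- fps_deriv h * (inverse h)\<^sup>2) * h * fps_cpow (inverse h) a"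
    using h0 by (simp add: cpow_deriv[OF ih0] fps_inverse_deriv)
  also have "\<dots> = - fps_const a * fps_deriv h * inverse h * fps_cpow (inverse h) a * (h * inverse h)"
    by (simp add: power2_eq_square algebra_simps fps_const_neg[symmetric] del: fps_const_neg)
  finally show "fps_deriv (fps_cpow (inverse h) a) = - fps_const a * fps_deriv h * inverse h * fps_cpow (inverse h) a"
    using hI by simp
qed

lemma key_coeff:
  fixes p :: "complex fps"
  assumes p0: "p $ 0 \<noteq> 0" and j: "j \<ge> 1"
  shows "(inverse p ^ j * fps_deriv (fps_X * p)) $ (j - 1) = (if j = 1 then 1 else 0)"
proof -
  define P where "P = inverse p"
  have pP: "p * P = 1" unfolding P_def using p0 by (simp add: inverse_mult_eq_1')
  have "P ^ j * fps_deriv (fps_X * p) = P ^ j * p + fps_X * (fps_deriv p * P ^ j)"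
    by (simp add: fps_deriv_mult algebra_simps)
  also have "P ^ j * p = P ^ (j - 1)"
  proof -
    have "P ^ j = P ^ (j - 1) * P" using j by (cases j) (auto simp: power_Suc2)
    thus ?thesis using pP by (simp add: mult_ac)
  qed
  finally have eq: "P ^ j * fps_deriv (fps_X * p) = P ^ (j - 1) + fps_X * (fps_deriv p * P ^ j)" .
  show ?thesis
  proof (cases "j = 1")
    case True thus ?thesis unfolding P_def[symmetric] eq by simp
  next
    case False
    define i where "i = j - 2"
    have i: "j = Suc (Suc i)" using j False unfolding i_def by arith
    have dP: "fps_deriv P = - fps_deriv p * P\<^sup>2" unfolding P_def using p0 by (simp add: fps_inverse_deriv)
    have "fps_deriv (P ^ Suc i) = fps_const (of_nat (Suc i)) * (- fps_deriv p * P\<^sup>2) * P ^ i"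
      unfolding fps_deriv_power dP by simp
    also have "\<dots> = - (fps_const (of_nat (Suc i)) * (fps_deriv p * P ^ Suc (Suc i)))"
      by (simp add: power2_eq_square algebra_simps)
    finally have d: "fps_deriv (P ^ Suc i) = - (fps_const (of_nat (Suc i)) * (fps_deriv p * P ^ Suc (Suc i)))" .
    define Q where "Q = P ^ Suc i"
    define R where "R = fps_deriv p * P ^ Suc (Suc i)"
    have d2: "fps_deriv Q = - (fps_const (of_nat (Suc i)) * R)" using d unfolding Q_def R_def .
    have "fps_deriv Q $ i = - (of_nat (Suc i) * R $ i)" unfolding d2 by simp
    hence "of_nat (Suc i) * Q $ Suc i = of_nat (Suc i) * (- R $ i)"
      by (simp only: fps_deriv_nth Suc_eq_plus1) simp
    hence hq: "Q $ Suc i = - R $ i"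
      by (subst (asm) mult_left_cancel) (simp_all del: of_nat_Suc)
    have h: "(P ^ Suc i) $ Suc i = - (fps_deriv p * P ^ Suc (Suc i)) $ i"
      using hq unfolding Q_def R_def .
    show ?thesis unfolding P_def[symmetric] eq using i h by simp
  qed
qed

lemma pow_inv_split:
  fixes p P :: "complex fps"
  assumes "p * P = 1" "k \<le> n"
  shows "p ^ k * P ^ n = P ^ (n - k)"
proof -
  have "P ^ n = P ^ k * P ^ (n - k)" using assms(2) by (simp add: power_add[symmetric])
  hence "p ^ k * P ^ n = (p * P) ^ k * P ^ (n - k)" by (simp add: power_mult_distrib mult_ac)
  thus ?thesis using assms(1) by simp
qed

lemma term_k:
  fixes p :: "complex fps"
  assumes p0: "p $ 0 \<noteq> 0" and k: "k < n"
  shows "(fps_X ^ k * p ^ k * fps_deriv (fps_X * p) * inverse p ^ n) $ (n - 1) = (if k = n - 1 then 1 else 0)"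
proof -
  have pP: "p * inverse p = 1" using p0 by (simp add: inverse_mult_eq_1')
  have "fps_X ^ k * p ^ k * fps_deriv (fps_X * p) * inverse p ^ n
        = fps_X ^ k * ((p ^ k * inverse p ^ n) * fps_deriv (fps_X * p))" by (simp only: mult_ac)
  also have "p ^ k * inverse p ^ n = inverse p ^ (n - k)" using pow_inv_split[OF pP] k by simp
  finally have eq: "fps_X ^ k * p ^ k * fps_deriv (fps_X * p) * inverse p ^ n
        = fps_X ^ k * (inverse p ^ (n - k) * fps_deriv (fps_X * p))" .
  have "(fps_X ^ k * p ^ k * fps_deriv (fps_X * p) * inverse p ^ n) $ (n - 1)
     = (inverse p ^ (n - k) * fps_deriv (fps_X * p)) $ (n - k - 1)"
    unfolding eq using k by (simp only: fps_X_power_mult_nth) (simp add: diff_commute)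
  also have "\<dots> = (if n - k = 1 then 1 else 0)" using key_coeff[OF p0, of "n - k"] k by simp
  finally show ?thesis using k by auto
qed

lemma cutoff_sum:
  "fps_cutoff n (D::complex fps) = (\<Sum>k<n. fps_const (D $ k) * fps_X ^ k)"
proof (rule fps_ext)
  fix i
  have "(\<Sum>k<n. fps_const (D $ k) * fps_X ^ k) $ i = (\<Sum>k<n. D $ k * (if i = k then 1 else 0))"
    by (simp add: fps_sum_nth fps_X_power_nth)
  also have "\<dots> = (\<Sum>k<n. if i = k then D $ k else 0)" by (rule sum.cong) auto
  finally have "(\<Sum>k<n. fps_const (D $ k) * fps_X ^ k) $ i = (\<Sum>k<n. if i = k then D $ k else 0)" .
  thus "fps_cutoff n D $ i = (\<Sum>k<n. fps_const (D $ k) * fps_X ^ k) $ i"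
    by (simp add: sum.delta)
qed

lemma cutoff_split:
  "(D::complex fps) = fps_cutoff n D + fps_X ^ n * fps_shift n D"
  by (rule fps_ext) (simp add: fps_X_power_mult_nth)

lemma lagrange_aux:
  fixes f G :: "complex fps"
  assumes f0: "f $ 0 = 0" and f1: "f $ 1 \<noteq> 0" and n: "n \<ge> 1"
  shows "(fps_deriv (G oo f) * inverse (fps_shift 1 f) ^ n) $ (n - 1) = of_nat n * G $ n"
proof -
  define p where "p = fps_shift 1 f"
  have p0: "p $ 0 \<noteq> 0" using f1 unfolding p_def by simp
  have fX: "f = fps_X * p" unfolding p_def
    by (rule fps_ext) (simp add: f0)
  define D where "D = fps_deriv G"
  define R where "R = fps_shift n D"
  have Dsplit: "D = (\<Sum>k<n. fps_const (D $ k) * fps_X ^ k) + fps_X ^ n * R"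
    unfolding R_def cutoff_sum[symmetric] by (rule cutoff_split)
  have "D oo f = (\<Sum>k<n. fps_const (D $ k) * f ^ k) + f ^ n * (R oo f)"
    apply (subst Dsplit)
    apply (simp add: fps_compose_add_distrib fps_compose_sum_distrib fps_compose_mult_distrib[OF f0]
                     fps_X_power_compose[OF f0])
    done
  note Dof = this
  have "fps_deriv (G oo f) * inverse p ^ n = (D oo f) * (fps_deriv f * inverse p ^ n)"
    by (simp add: fps_compose_deriv[OF f0] D_def mult_ac)
  also have "\<dots> = (\<Sum>k<n. fps_const (D $ k) * (f ^ k * fps_deriv f * inverse p ^ n))
        + f ^ n * (R oo f) * (fps_deriv f * inverse p ^ n)"
    unfolding Dof by (simp add: distrib_right distrib_left sum_distrib_right sum_distrib_left mult_ac)
  also have "f ^ n * (R oo f) * (fps_deriv f * inverse p ^ n) = fps_X ^ n * (p ^ n * (R oo f) * fps_deriv f * inverse p ^ n)"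
    by (subst (1) fX) (simp add: power_mult_distrib mult_ac)
  finally have big: "fps_deriv (G oo f) * inverse p ^ n = (\<Sum>k<n. fps_const (D $ k) * (f ^ k * fps_deriv f * inverse p ^ n))
        + fps_X ^ n * (p ^ n * (R oo f) * fps_deriv f * inverse p ^ n)" .
  have "(fps_deriv (G oo f) * inverse p ^ n) $ (n - 1)
      = (\<Sum>k<n. D $ k * (f ^ k * fps_deriv f * inverse p ^ n) $ (n - 1))"
    unfolding big using n by (simp add: fps_sum_nth fps_X_power_mult_nth)
  also have "\<dots> = (\<Sum>k<n. D $ k * (fps_X ^ k * p ^ k * fps_deriv (fps_X * p) * inverse p ^ n) $ (n - 1))"
    by (simp add: fX[symmetric] power_mult_distrib[symmetric])
  also have "\<dots> = (\<Sum>k<n. D $ k * (if k = n - 1 then 1 else 0))"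
    by (rule sum.cong[OF refl], subst term_k[OF p0]) auto
  also have "\<dots> = D $ (n - 1)" using n by (simp add: sum.delta' if_distrib[of "\<lambda>x. _ * x"] cong: if_cong)
  also have "\<dots> = of_nat n * G $ n" unfolding D_def using n by simp
  finally show ?thesis unfolding p_def .
qed

lemma lagrange:
  fixes f H :: "complex fps"
  assumes f0: "f $ 0 = 0" and f1: "f $ 1 \<noteq> 0" and n: "n \<ge> 1"
  shows "of_nat n * (H oo fps_inv f) $ n = (fps_deriv H * inverse (fps_shift 1 f) ^ n) $ (n - 1)"
proof -
  have i0: "fps_inv f $ 0 = 0" by (simp add: fps_inv_def)
  have "(H oo fps_inv f) oo f = H"
    using fps_compose_assoc[OF f0 i0, of H] fps_inv[OF f0 f1] by simp
  thus ?thesis using lagrange_aux[OF f0 f1 n, of "H oo fps_inv f"] by simp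
qed

lemma fact_lemma:
  assumes "l \<le> n - 1" "n \<ge> 1"
  shows "fact (n - 1) * (n - l) = ((n - 1) choose l) * fact l * fact (n - l)"
proof -
  have e: "n - l = Suc (n - 1 - l)" using assms by arith
  have "fact (n - l) = (fact (Suc (n - 1 - l)) :: nat)" by (simp only: e)
  also have "\<dots> = Suc (n - 1 - l) * fact (n - 1 - l)" by simp
  finally have "fact (n - l) = (n - l) * fact (n - 1 - l)" by (simp only: e)
  moreover have "fact l * fact (n - 1 - l) * ((n - 1) choose l) = fact (n - 1)"
    using binomial_fact_lemma[OF assms(1)] .
  ultimately show ?thesis by (simp add: mult_ac)
qed

theorem mainTheorem6:
  fixes \<alpha> :: complex and S :: "nat \<Rightarrow> complex poly" and n :: nat and x :: complex
  assumes "sheffer (fps_cpow (fps_shift 1 (fps_exp 1 - 1)) \<alpha>) (fps_ln 1) S"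
    and "n \<ge> 1"
  shows "poly (S n) x =
    (\<Sum>l = 0..n-1. of_nat ((n-1) choose l) * narumi (- of_nat n) l * bernoulli_ord \<alpha> (n-l) x)"
proof -
  define h where "h = fps_shift 1 (fps_exp (1::complex) - 1)"
  define g where "g = fps_cpow h \<alpha>"
  define L where "L = fps_ln (1::complex)"
  define fi where "fi = fps_inv L"
  define H where "H = inverse g * fps_exp x"
  define p where "p = fps_shift 1 L"
  have h0: "h $ 0 = 1" unfolding h_def by simp
  have g0: "g $ 0 \<noteq> 0" unfolding g_def by (simp add: cpow_0)
  have L0: "L $ 0 = 0" and L1: "L $ 1 \<noteq> 0" unfolding L_def by (simp_all add: fps_ln_nth)
  have p0: "p $ 0 = 1" unfolding p_def L_def by (simp add: fps_ln_nth)
  have fi0: "fi $ 0 = 0" unfolding fi_def by (simp add: fps_inv_def)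
  have sh: "Abs_fps (\<lambda>k. poly (S k) x / fact k) = inverse (g oo fi) * (fps_exp x oo fi)"
    using assms(1) unfolding sheffer_def g_def h_def fi_def L_def by blast
  also have "inverse (g oo fi) = inverse g oo fi" using fps_inverse_compose[OF fi0 g0] by simp
  also have "(inverse g oo fi) * (fps_exp x oo fi) = H oo fi"
    unfolding H_def by (simp add: fps_compose_mult_distrib[OF fi0])
  finally have "poly (S n) x / fact n = (H oo fi) $ n"
    by (metis fps_nth_Abs_fps)
  hence Sn: "poly (S n) x = fact n * (H oo fi) $ n" by (simp add: field_simps)
  have lag: "of_nat n * (H oo fi) $ n = (inverse p ^ n * fps_deriv H) $ (n - 1)"
    using lagrange[OF L0 L1 assms(2), of H] unfolding fi_def p_def by (simp add: mult.commute)
  have Hb: "bernoulli_ord \<alpha> k x = fact k * H $ k" for k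
    using inv_cpow[OF h0, of \<alpha>] unfolding bernoulli_ord_def H_def g_def h_def by simp
  have Nn: "narumi (- of_nat n) l = fact l * (inverse p ^ n) $ l" for l
    unfolding narumi_def p_def[symmetric] L_def[symmetric] cpow_neg_nat[OF p0 assms(2)] ..
  have "fact n * (H oo fi) $ n = fact (n - 1) * (of_nat n * (H oo fi) $ n)"
    using assms(2) by (subst fact_reduce) (simp_all add: mult_ac)
  also have "\<dots> = fact (n - 1) * (\<Sum>l = 0..n-1. (inverse p ^ n) $ l * (of_nat (n - l) * H $ (n - l)))"
    unfolding lag fps_mult_nth fps_deriv_nth
  proof (rule arg_cong[where f = "\<lambda>y. _ * y"], rule sum.cong[OF refl])
    fix l assume "l \<in> {0..n-1}"
    hence e: "n - 1 - l + 1 = n - l" using assms(2) by auto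
    show "(inverse p ^ n) $ l * (of_nat (n - 1 - l + 1) * H $ (n - 1 - l + 1)) =
          (inverse p ^ n) $ l * (of_nat (n - l) * H $ (n - l))" by (simp only: e)
  qed
  also have "\<dots> = (\<Sum>l = 0..n-1. of_nat ((n-1) choose l) * narumi (- of_nat n) l * bernoulli_ord \<alpha> (n-l) x)"
    unfolding sum_distrib_left Nn Hb
  proof (rule sum.cong[OF refl])
    fix l assume "l \<in> {0..n-1}"
    hence l: "l \<le> n - 1" by simp
    have E: "(fact (n - 1) * of_nat (n - l) :: complex) = of_nat ((n - 1) choose l) * fact l * fact (n - l)"
      using fact_lemma[OF l assms(2)] by (metis of_nat_fact of_nat_mult)
    have "fact (n - 1) * ((inverse p ^ n) $ l * (of_nat (n - l) * H $ (n - l)))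
        = (fact (n - 1) * of_nat (n - l)) * ((inverse p ^ n) $ l * H $ (n - l))"
      by (simp only: mult_ac)
    also have "\<dots> = (of_nat ((n - 1) choose l) * fact l * fact (n - l)) * ((inverse p ^ n) $ l * H $ (n - l))"
      by (simp only: E)
    also have "\<dots> = of_nat ((n - 1) choose l) * (fact l * (inverse p ^ n) $ l) * (fact (n - l) * H $ (n - l))"
      by (simp only: mult_ac)
    finally show "fact (n - 1) * ((inverse p ^ n) $ l * (of_nat (n - l) * H $ (n - l))) =
          of_nat ((n - 1) choose l) * (fact l * (inverse p ^ n) $ l) * (fact (n - l) * H $ (n - l))" .
  qed
  finally show ?thesis using Sn by simp
qed

end
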